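(* Let $(\mathcal{Y},\mathbf{h})$ be an Ingletonian polymatroid and let $0\le \epsilon\le \mathbf{h}(\mathcal{Y})$. Define $\mathbf{g}:2^{\mathcal{Y}}\to\mathbb{R}$ by $\mathbf{g}(\mathcal{A})=\min\big(\mathbf{h}(\mathcal{A}),\ \mathbf{h}(\mathcal{Y})-\epsilon\big)$ for all $\mathcal{A}\subseteq\mathcal{Y}$. Then $(\mathcal{Y},\mathbf{g})$ is also an Ingletonian polymatroid.
   Context: A polymatroid $(\mathcal{X},\mathbf{h})$ consists of a finite ground set $\mathcal{X}$ and a function $\mathbf{h}:2^{\mathcal{X}}\to\mathbb{R}_{\ge 0}$ with $\mathbf{h}(\emptyset)=0$, $\mathbf{h}(\mathcal{A})\le\mathbf{h}(\mathcal{B})$ whenever $\mathcal{A}\subseteq\mathcal{B}$, and $\mathbf{h}(\mathcal{A}\cup\mathcal{B})+\mathbf{h}(\mathcal{A}\cap\mathcal{B})\le\mathbf{h}(\mathcal{A})+\mathbf{h}(\mathcal{B})$ for all $\mathcal{A},\mathcal{B}\subseteq\mathcal{X}$. Writing concatenation for union, define for subsets $\mathcal{A}_1,\dots,\mathcal{A}_4\subseteq\mathcal{X}$ $J_{\mathbf{h}}(\mathcal{A}_1,\mathcal{A}_2,\mathcal{A}_3,\mathcal{A}_4)=\mathbf{h}(\mathcal{A}_1\mathcal{A}_2)+\mathbf{h}(\mathcal{A}_1\mathcal{A}_3)+\mathbf{h}(\mathcal{A}_1\mathcal{A}_4)+\mathbf{h}(\mathcal{A}_2\mathcal{A}_3)+\mathbf{h}(\mathcal{A}_2\mathcal{A}_4)-\mathbf{h}(\mathcal{A}_1)-\mathbf{h}(\mathcal{A}_2)-\mathbf{h}(\mathcal{A}_3\mathcal{A}_4)-\mathbf{h}(\mathcal{A}_1\mathcal{A}_2\mathcal{A}_3)-\mathbf{h}(\mathcal{A}_1\mathcal{A}_2\mathcal{A}_4)$.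 A polymatroid is Ingletonian if $J_{\mathbf{h}}(\mathcal{A}_1,\mathcal{A}_2,\mathcal{A}_3,\mathcal{A}_4)\ge 0$ for all subsets $\mathcal{A}_1,\dots,\mathcal{A}_4\subseteq\mathcal{X}$. *)

theory Defs
  imports Complex_Main
begin

definition polymatroid :: "'a set \<Rightarrow> ('a set \<Rightarrow> real) \<Rightarrow> bool" where
  "polymatroid Y h \<longleftrightarrow> finite Y \<and>
     (\<forall>A. A \<subseteq> Y \<longrightarrow> h A \<ge> 0) \<and>
     h {} = 0 \<and>
     (\<forall>A B. A \<subseteq> B \<and> B \<subseteq> Y \<longrightarrow> h A \<le> h B) \<and>
     (\<forall>A B. A \<subseteq> Y \<and> B \<subseteq> Y \<longrightarrow> h (A \<union> B) + h (A \<inter> B) \<le> h A + h B)"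

definition ingleton_J :: "('a set \<Rightarrow> real) \<Rightarrow> 'a set \<Rightarrow> 'a set \<Rightarrow> 'a set \<Rightarrow> 'a set \<Rightarrow> real" where
  "ingleton_J h A1 A2 A3 A4 =
     h (A1 \<union> A2) + h (A1 \<union> A3) + h (A1 \<union> A4) + h (A2 \<union> A3) + h (A2 \<union> A4)
     - h A1 - h A2 - h (A3 \<union> A4) - h (A1 \<union> A2 \<union> A3) - h (A1 \<union> A2 \<union> A4)"

definition ingletonian :: "'a set \<Rightarrow> ('a set \<Rightarrow> real) \<Rightarrow> bool" where
  "ingletonian Y h \<longleftrightarrow> polymatroid Y h \<and>
     (\<forall>A1 A2 A3 A4. A1 \<subseteq> Y \<and> A2 \<subseteq> Y \<and> A3 \<subseteq> Y \<and> A4 \<subseteq> Y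
        \<longrightarrow> ingleton_J h A1 A2 A3 A4 \<ge> 0)"

end

theory Submission
  imports Defs
begin

lemma core: fixes h1 h2 h3 h4 h12 h13 h14 h23 h24 h34 h123 h124 h134 h234 h1234 c :: real
  assumes "0 \<le> c" "0 \<le> h1" "0 \<le> h2" "0 \<le> h3" "0 \<le> h4"
    "h1 \<le> h12"
    "h1 \<le> h13"
    "h1 \<le> h14"
    "h2 \<le> h12"
    "h2 \<le> h23"
    "h2 \<le> h24"
    "h3 \<le> h13"
    "h3 \<le> h23"
    "h3 \<le> h34"
    "h4 \<le> h14"
    "h4 \<le> h24"
    "h4 \<le> h34"
    "h12 \<le> h123"
    "h12 \<le> h124"
    "h13 \<le> h123"
    "h13 \<le> h134"
    "h14 \<le> h124"
    "h14 \<le> h134"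
    "h23 \<le> h123"
    "h23 \<le> h234"
    "h24 \<le> h124"
    "h24 \<le> h234"
    "h34 \<le> h134"
    "h34 \<le> h234"
    "h123 \<le> h1234"
    "h124 \<le> h1234"
    "h134 \<le> h1234"
    "h234 \<le> h1234"
    "h12 + 0 \<le> h1 + h2"
    "h13 + 0 \<le> h1 + h3"
    "h14 + 0 \<le> h1 + h4"
    "h23 + 0 \<le> h2 + h3"
    "h24 + 0 \<le> h2 + h4"
    "h34 + 0 \<le> h3 + h4"
    "h123 + h1 \<le> h12 + h13"
    "h124 + h1 \<le> h12 + h14"
    "h134 + h1 \<le> h13 + h14"
    "h123 + h2 \<le> h12 + h23"
    "h124 + h2 \<le> h12 + h24"
    "h234 + h2 \<le> h23 + h24"
    "h123 + h3 \<le> h13 + h23"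
    "h134 + h3 \<le> h13 + h34"
    "h234 + h3 \<le> h23 + h34"
    "h124 + h4 \<le> h14 + h24"
    "h134 + h4 \<le> h14 + h34"
    "h234 + h4 \<le> h24 + h34"
    "h1234 + h12 \<le> h123 + h124"
    "h1234 + h13 \<le> h123 + h134"
    "h1234 + h14 \<le> h124 + h134"
    "h1234 + h23 \<le> h123 + h234"
    "h1234 + h24 \<le> h124 + h234"
    "h1234 + h34 \<le> h134 + h234"
    "0 \<le> h12+h13+h14+h23+h24-h1-h2-h34-h123-h124"
  shows "0 \<le> min h12 c+min h13 c+min h14 c+min h23 c+min h24 c - min h1 c - min h2 c - min h34 c - min h123 c - min h124 c"
  using assms by (smt (z3))

lemma pm_mono: "polymatroid Y h \<Longrightarrow> X \<subseteq> Z \<Longrightarrow> Z \<subseteq> Y \<Longrightarrow> h X \<le> h Z"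
  unfolding polymatroid_def by blast

lemma pm_nonneg: "polymatroid Y h \<Longrightarrow> X \<subseteq> Y \<Longrightarrow> 0 \<le> h X"
  unfolding polymatroid_def by blast

lemma pm_sub: assumes "polymatroid Y h" "X \<subseteq> Y" "Z \<subseteq> Y" "W \<subseteq> X \<inter> Z" "U = X \<union> Z"
  shows "h U + h W \<le> h X + h Z"
proof -
  have "h (X \<union> Z) + h (X \<inter> Z) \<le> h X + h Z" using assms unfolding polymatroid_def by blast
  moreover have "h W \<le> h (X \<inter> Z)" using assms pm_mono[of Y h W "X \<inter> Z"] by blast
  ultimately show ?thesis using assms by simp
qed

lemma pm_sub0: assumes "polymatroid Y h" "X \<subseteq> Y" "Z \<subseteq> Y" "U = X \<union> Z"
  shows "h U + 0 \<le> h X + h Z"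
  using pm_sub[OF assms(1-3) _ assms(4), of "{}"] assms(1) unfolding polymatroid_def by simp

theorem theorem1:
  fixes Y :: "'a set" and h :: "'a set \<Rightarrow> real" and \<epsilon> :: real
  assumes "ingletonian Y h"
    and "0 \<le> \<epsilon>" and "\<epsilon> \<le> h Y"
  shows "ingletonian Y (\<lambda>A. min (h A) (h Y - \<epsilon>))"
proof -
  have P: "polymatroid Y h" using assms(1) unfolding ingletonian_def by blast
  have I: "\<And>A1 A2 A3 A4. A1 \<subseteq> Y \<Longrightarrow> A2 \<subseteq> Y \<Longrightarrow> A3 \<subseteq> Y \<Longrightarrow> A4 \<subseteq> Y \<Longrightarrow>
     0 \<le> ingleton_J h A1 A2 A3 A4" using assms(1) unfolding ingletonian_def by blast
  define c where "c = h Y - \<epsilon>"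
  have c0: "0 \<le> c" using assms by (simp add: c_def)
  have PG: "polymatroid Y (\<lambda>A. min (h A) c)"
    unfolding polymatroid_def
  proof (intro conjI allI impI)
    show "finite Y" using P unfolding polymatroid_def by blast
    fix A assume "A \<subseteq> Y" thus "0 \<le> min (h A) c" using pm_nonneg[OF P] c0 by simp
  next
    show "min (h {}) c = 0" using P c0 unfolding polymatroid_def by simp
  next
    fix A B assume "A \<subseteq> B \<and> B \<subseteq> Y" thus "min (h A) c \<le> min (h B) c"
      using pm_mono[OF P, of A B] by simp
  next
    fix A B assume AB: "A \<subseteq> Y \<and> B \<subseteq> Y"
    have 1: "h (A \<union> B) + h (A \<inter> B) \<le> h A + h B" using P AB unfolding polymatroid_def by blast
    have 2: "h A \<le> h (A \<union> B)" "h B \<le> h (A \<union> B)" "h (A \<inter> B) \<le> h A" "h (A \<inter> B) \<le> h B"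
      using pm_mono[OF P] AB by auto
    show "min (h (A \<union> B)) c + min (h (A \<inter> B)) c \<le> min (h A) c + min (h B) c"
      using 1 2 by linarith
  qed
  show ?thesis
    unfolding ingletonian_def c_def[symmetric]
  proof (intro conjI allI impI PG)
    fix A1 A2 A3 A4 assume A: "A1 \<subseteq> Y \<and> A2 \<subseteq> Y \<and> A3 \<subseteq> Y \<and> A4 \<subseteq> Y"
    have J: "0 \<le> ingleton_J h A1 A2 A3 A4" using I A by blast
    show "0 \<le> ingleton_J (\<lambda>A. min (h A) c) A1 A2 A3 A4"
      unfolding ingleton_J_def
      apply (rule core[where ?h1234.0 = "h (A1 \<union> A2 \<union> A3 \<union> A4)" and ?h134.0 = "h (A1 \<union> A3 \<union> A4)" and ?h234.0 = "h (A2 \<union> A3 \<union> A4)" and ?h3.0 = "h A3" and ?h4.0 = "h A4"])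
      using c0 J A unfolding ingleton_J_def
      apply -
      apply ((simp; fail) | (rule pm_nonneg[OF P]; auto; fail) | (rule pm_mono[OF P]; auto; fail)
         | (rule pm_sub0[OF P]; auto; fail) | (rule pm_sub[OF P]; auto; fail))+
      done
  qed
qed

end
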